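(* Let $n\ge 2$ and let $(u,v)$ be an MAB pair of binary words with $|u|=|v|=n$. Put $i=\mathrm{lsb}(u,v)$ and $j=\mathrm{lsb}(v,u)$. Then $i+j\le n$ if and only if there exist words $\alpha,\beta,\beta',\alpha'\in\Sigma^+$ and $x,x'\in\Sigma^*$ such that $u=\alpha x\beta$, $v=\beta' x'\alpha'$, $\beta\sim_{\mathrm{abl}}\beta'$, $\alpha\sim_{\mathrm{abl}}\alpha'$, $|\alpha|=j$, $|\beta|=i$, and both $(\beta,\beta')$ and $(\alpha,\alpha')$ are MAU pairs.
   Context: Let $\Sigma=\{a,b\}$. For a word $w$ and a letter $c$, $|w|_c$ denotes the number of occurrences of $c$ in $w$. Two words $x,y$ are abelian equivalent, written $x\sim_{\mathrm{abl}}y$, if $|x|_c=|y|_c$ for all $c\in\Sigma$. For words $u,v$: a pair $(x,y)$ is an internal abelian-border of $(u,v)$ if $x$ is a nonempty proper suffix of $u$, $y$ is a proper prefix of $v$, and $x\sim_{\mathrm{abl}}y$; it is an external abelian-border of $(u,v)$ if $x$ is a nonempty proper prefix of $u$, $y$ is a proper suffix of $v$, and $x\sim_{\mathrm{abl}}y$. The pair $(u,v)$ is mutually abelian-bordered (MAB) if it has both an internal and an external abelian-border, and mutually abelian-unbordered (MAU) if it has neither. If $(u,v)$ has an internal abelian-border, $\mathrm{sb}(u,v)$ denotes its internal abelian-border $(x,y)$ of minimal length and $\mathrm{lsb}(u,v)=|x|$ is that minimal length. *)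

theory Defs
  imports Main "HOL-Library.Sublist"
begin

datatype sigma = a | b

definition abl_eq :: "sigma list \<Rightarrow> sigma list \<Rightarrow> bool" where
  "abl_eq x y \<longleftrightarrow> (\<forall>c. count_list x c = count_list y c)"

definition int_border :: "sigma list \<Rightarrow> sigma list \<Rightarrow> sigma list \<Rightarrow> sigma list \<Rightarrow> bool" where
  "int_border u v x y \<longleftrightarrow> x \<noteq> [] \<and> strict_suffix x u \<and> strict_prefix y v \<and> abl_eq x y"

definition ext_border :: "sigma list \<Rightarrow> sigma list \<Rightarrow> sigma list \<Rightarrow> sigma list \<Rightarrow> bool" where
  "ext_border u v x y \<longleftrightarrow> x \<noteq> [] \<and> strict_prefix x u \<and> strict_suffix y v \<and> abl_eq x y"

definition MAB :: "sigma list \<Rightarrow> sigma list \<Rightarrow> bool" where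
  "MAB u v \<longleftrightarrow> (\<exists>x y. int_border u v x y) \<and> (\<exists>x y. ext_border u v x y)"

definition MAU :: "sigma list \<Rightarrow> sigma list \<Rightarrow> bool" where
  "MAU u v \<longleftrightarrow> \<not> (\<exists>x y. int_border u v x y) \<and> \<not> (\<exists>x y. ext_border u v x y)"

text \<open>Length of the shortest internal abelian-border (meaningful when one exists).\<close>
definition lsb :: "sigma list \<Rightarrow> sigma list \<Rightarrow> nat" where
  "lsb u v = (LEAST k. \<exists>x y. int_border u v x y \<and> length x = k)"

end

theory Submission
  imports Defs
begin

lemma cnt_len: "length x = count_list x a + count_list x b"
proof (induction x)
  case (Cons c x) thus ?case by (cases c) auto
qed simp

lemma abl_len: "abl_eq x y \<Longrightarrow> length x = length y"
  unfolding abl_eq_def by (metis cnt_len)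

lemma ext_to_int:
  assumes "abl_eq A B" "ext_border A B p q"
  shows "\<exists>z w. int_border A B z w"
proof -
  from assms(2) have p: "p \<noteq> []" "strict_prefix p A" "strict_suffix q B" "abl_eq p q"
    unfolding ext_border_def by auto
  obtain z where z: "A = p @ z" "z \<noteq> []" using p(2)
    by (metis append_Nil2 prefix_def strict_prefix_def)
  obtain w where w: "B = w @ q" "w \<noteq> []" using p(3)
    by (metis append.right_neutral strict_suffix_def suffix_def self_append_conv2)
  have q: "q \<noteq> []" using abl_len[OF p(4)] p(1) by auto
  have "abl_eq z w" using assms(1) p(4) z w unfolding abl_eq_def
    by (metis add_left_cancel add.commute count_list_append)
  moreover have "strict_suffix z A" using z p(1)
    by (simp add: strict_suffix_def suffix_def)
  moreover have "strict_prefix w B" using w q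
    by (simp add: strict_prefix_def prefix_def)
  ultimately show ?thesis using z unfolding int_border_def by blast
qed

lemma int_to_ext:
  assumes "abl_eq A B" "int_border A B p q"
  shows "\<exists>z w. ext_border A B z w"
proof -
  from assms(2) have p: "p \<noteq> []" "strict_suffix p A" "strict_prefix q B" "abl_eq p q"
    unfolding int_border_def by auto
  obtain z where z: "A = z @ p" "z \<noteq> []" using p(2)
    by (metis append.right_neutral strict_suffix_def suffix_def self_append_conv2)
  obtain w where w: "B = q @ w" "w \<noteq> []" using p(3)
    by (metis append_Nil2 prefix_def strict_prefix_def)
  have q: "q \<noteq> []" using abl_len[OF p(4)] p(1) by auto
  have "abl_eq z w" using assms(1) p(4) z w unfolding abl_eq_def
    by (metis add_left_cancel add.commute count_list_append)
  moreover have "strict_prefix z A" using z p(1)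
    by (simp add: strict_prefix_def prefix_def)
  moreover have "strict_suffix w B" using w q
    by (simp add: strict_suffix_def suffix_def)
  ultimately show ?thesis using z unfolding ext_border_def by blast
qed

theorem mainTheorem1:
  fixes u v :: "sigma list" and n :: nat
  assumes "n \<ge> 2" and "length u = n" and "length v = n" and "MAB u v"
  shows "lsb u v + lsb v u \<le> n \<longleftrightarrow>
    (\<exists>\<alpha> \<beta> \<beta>' \<alpha>' x x'. \<alpha> \<noteq> [] \<and> \<beta> \<noteq> [] \<and> \<beta>' \<noteq> [] \<and> \<alpha>' \<noteq> [] \<and>
       u = \<alpha> @ x @ \<beta> \<and> v = \<beta>' @ x' @ \<alpha>' \<and>
       abl_eq \<beta> \<beta>' \<and> abl_eq \<alpha> \<alpha>' \<and>
       length \<alpha> = lsb v u \<and> length \<beta> = lsb u v \<and>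
       MAU \<beta> \<beta>' \<and> MAU \<alpha> \<alpha>')"
proof
  assume "\<exists>\<alpha> \<beta> \<beta>' \<alpha>' x x'. \<alpha> \<noteq> [] \<and> \<beta> \<noteq> [] \<and> \<beta>' \<noteq> [] \<and> \<alpha>' \<noteq> [] \<and>
       u = \<alpha> @ x @ \<beta> \<and> v = \<beta>' @ x' @ \<alpha>' \<and>
       abl_eq \<beta> \<beta>' \<and> abl_eq \<alpha> \<alpha>' \<and>
       length \<alpha> = lsb v u \<and> length \<beta> = lsb u v \<and>
       MAU \<beta> \<beta>' \<and> MAU \<alpha> \<alpha>'"
  then show "lsb u v + lsb v u \<le> n" using assms(2) by auto
next
  assume len: "lsb u v + lsb v u \<le> n"
  define i where "i = lsb u v"
  define j where "j = lsb v u"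
  obtain x0 y0 where "int_border u v x0 y0" using assms(4) unfolding MAB_def by blast
  hence "\<exists>x y. int_border u v x y \<and> length x = length x0" by blast
  hence "\<exists>x y. int_border u v x y \<and> length x = i" unfolding i_def lsb_def by (rule LeastI)
  then obtain \<beta> \<beta>' where B: "int_border u v \<beta> \<beta>'" "length \<beta> = i" by blast
  have iL: "\<And>x y. int_border u v x y \<Longrightarrow> i \<le> length x"
    unfolding i_def lsb_def by (metis (mono_tags, lifting) Least_le)
  obtain x1 y1 where "ext_border u v x1 y1" using assms(4) unfolding MAB_def by blast
  hence "int_border v u y1 x1" unfolding ext_border_def int_border_def abl_eq_def
    by (metis abl_eq_def abl_len length_0_conv)
  hence "\<exists>x y. int_border v u x y \<and> length x = length y1" by blast
  hence "\<exists>x y. int_border v u x y \<and> length x = j" unfolding j_def lsb_def by (rule LeastI)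
  then obtain \<alpha>' \<alpha> where A: "int_border v u \<alpha>' \<alpha>" "length \<alpha>' = j" by blast
  have jL: "\<And>x y. int_border v u x y \<Longrightarrow> j \<le> length x"
    unfolding j_def lsb_def by (metis (mono_tags, lifting) Least_le)
  have Bs: "\<beta> \<noteq> []" "strict_suffix \<beta> u" "strict_prefix \<beta>' v" "abl_eq \<beta> \<beta>'"
    using B unfolding int_border_def by auto
  have As: "\<alpha>' \<noteq> []" "strict_suffix \<alpha>' v" "strict_prefix \<alpha> u" "abl_eq \<alpha>' \<alpha>"
    using A unfolding int_border_def by auto
  have lB: "length \<beta>' = i" using abl_len[OF Bs(4)] B(2) by simp
  have lA: "length \<alpha> = j" using abl_len[OF As(4)] A(2) by simp
  have Aab: "abl_eq \<alpha> \<alpha>'" using As(4) unfolding abl_eq_def by simp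
  have ua: "\<alpha> = take j u"
  proof -
    obtain z where "u = \<alpha> @ z" using As(3) unfolding strict_prefix_def prefix_def by blast
    thus ?thesis using lA by simp
  qed
  have ub: "\<beta> = drop (n - i) u"
  proof -
    obtain z where "u = z @ \<beta>" using Bs(2) unfolding strict_suffix_def suffix_def by blast
    thus ?thesis using B(2) assms(2) by simp
  qed
  have va: "\<beta>' = take i v"
  proof -
    obtain z where "v = \<beta>' @ z" using Bs(3) unfolding strict_prefix_def prefix_def by blast
    thus ?thesis using lB by simp
  qed
  have vb: "\<alpha>' = drop (n - j) v"
  proof -
    obtain z where "v = z @ \<alpha>'" using As(2) unfolding strict_suffix_def suffix_def by blast
    thus ?thesis using A(2) assms(3) by simp
  qed
  have uu: "u = \<alpha> @ drop j (take (n - i) u) @ \<beta>"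
  proof -
    have "take j (take (n - i) u) = take j u" using len i_def j_def by simp
    hence "take j u @ drop j (take (n - i) u) = take (n - i) u"
      by (metis append_take_drop_id)
    thus ?thesis using ua ub by (metis append_assoc append_take_drop_id)
  qed
  have vv: "v = \<beta>' @ drop i (take (n - j) v) @ \<alpha>'"
  proof -
    have "take i (take (n - j) v) = take i v" using len i_def j_def by simp
    hence "take i v @ drop i (take (n - j) v) = take (n - j) v"
      by (metis append_take_drop_id)
    thus ?thesis using va vb by (metis append_assoc append_take_drop_id)
  qed
  have noB: "\<not> (\<exists>p q. int_border \<beta> \<beta>' p q)"
  proof
    assume "\<exists>p q. int_border \<beta> \<beta>' p q"
    then obtain p q where pq: "int_border \<beta> \<beta>' p q" by blast
    hence "int_border u v p q" using Bs unfolding int_border_def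
      by (meson prefix_order.less_trans suffix_order.less_trans)
    moreover have "length p < i" using pq B(2) unfolding int_border_def
      by (metis suffix_length_less)
    ultimately show False using iL by fastforce
  qed
  have noA: "\<not> (\<exists>p q. ext_border \<alpha> \<alpha>' p q)"
  proof
    assume "\<exists>p q. ext_border \<alpha> \<alpha>' p q"
    then obtain p q where pq: "ext_border \<alpha> \<alpha>' p q" by blast
    hence "int_border v u q p" using As unfolding int_border_def ext_border_def abl_eq_def
      by (metis abl_eq_def abl_len length_0_conv prefix_order.less_trans suffix_order.less_trans)
    moreover have "length q < j" using pq A(2) unfolding ext_border_def
      by (metis suffix_length_less)
    ultimately show False using jL by fastforce
  qed
  have "MAU \<beta> \<beta>'" unfolding MAU_def using noB ext_to_int[OF Bs(4)] by blast
  moreover have "MAU \<alpha> \<alpha>'" unfolding MAU_def using noA int_to_ext[OF Aab] by blast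
  ultimately show "\<exists>\<alpha> \<beta> \<beta>' \<alpha>' x x'. \<alpha> \<noteq> [] \<and> \<beta> \<noteq> [] \<and> \<beta>' \<noteq> [] \<and> \<alpha>' \<noteq> [] \<and>
       u = \<alpha> @ x @ \<beta> \<and> v = \<beta>' @ x' @ \<alpha>' \<and>
       abl_eq \<beta> \<beta>' \<and> abl_eq \<alpha> \<alpha>' \<and>
       length \<alpha> = lsb v u \<and> length \<beta> = lsb u v \<and>
       MAU \<beta> \<beta>' \<and> MAU \<alpha> \<alpha>'"
  proof -
    have "\<alpha> \<noteq> [] \<and> \<beta> \<noteq> [] \<and> \<beta>' \<noteq> [] \<and> \<alpha>' \<noteq> [] \<and>
       u = \<alpha> @ drop j (take (n - i) u) @ \<beta> \<and> v = \<beta>' @ drop i (take (n - j) v) @ \<alpha>' \<and>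
       abl_eq \<beta> \<beta>' \<and> abl_eq \<alpha> \<alpha>' \<and>
       length \<alpha> = lsb v u \<and> length \<beta> = lsb u v \<and>
       MAU \<beta> \<beta>' \<and> MAU \<alpha> \<alpha>'"
      using uu vv Bs As Aab lA lB A(2) B(2) i_def j_def \<open>MAU \<beta> \<beta>'\<close> \<open>MAU \<alpha> \<alpha>'\<close> by auto
    thus ?thesis by blast
  qed
qed

end
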